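(* For any monoid $M$, $\mathfrak{L}(\mathrm{Val},\mathrm{PDA},M)=\mathfrak{L}(\mathrm{Val},\mathrm{NFA},\mathrm{P}_2\times M)$.
   Context: A pushdown automaton is $(Q,\Sigma,\Gamma,\delta,q_0,Q_a)$ with finite states $Q$, input alphabet $\Sigma$, stack alphabet $\Gamma$, initial state $q_0$, accept states $Q_a$, and $\delta: Q\times\Sigma_\varepsilon\times\Gamma_\varepsilon\to\mathbb{P}(Q\times\Gamma_\varepsilon)$ (with $X_\varepsilon=X\cup\{\varepsilon\}$; a transition reads an input letter or nothing, pops a symbol or nothing, pushes a symbol or nothing). A valence PDA over $M$ assigns to each transition an element of $M$ (its valence); the valence of a computation is the product of the valences of its transitions in order, and a word is accepted if there is an accepting computation for it whose valence is the identity of $M$ (accepting computations being those of the underlying PDA, ending in an accept state with empty stack). $\mathfrak{L}(\mathrm{Val},\mathrm{PDA},M)$ is the family of languages so accepted. A valence automaton over a monoid $N$ is a nondeterministic finite automaton with $\varepsilon$-moves in which each transition carries a valence in $N$, accepting a word if some computation reading it from the initial state to an accept state has valence product equal to the identity; $\mathfrak{L}(\mathrm{Val},\mathrm{NFA},N)$ is the family of such languages. For a finite alphabet $X$, the polycyclic monoid $P(X)$ is the monoid of partial functions on $X^*$ generated by $P_x:u\mapsto ux$ and $Q_x: ux\mapsto u$ (defined only on $X^*x$), $x\in X$; $\mathrm{P}_2$ is the polycyclic monoid on a two-letter alphabet. *)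

theory Defs
  imports Main
begin

text \<open>States and stack symbols are taken from nat (every finite set embeds into nat).
A transition (p, a, g, q, h) reads a or nothing (None), pops g or nothing,
moves to q and pushes h or nothing. The stack is a list with its top at the head.\<close>

type_synonym 'a pda_trans = "nat \<times> 'a option \<times> nat option \<times> nat \<times> nat option"

record ('a, 'm) vpda =
  pda_states :: "nat set"
  pda_delta  :: "'a pda_trans set"
  pda_val    :: "'a pda_trans \<Rightarrow> 'm"
  pda_init   :: nat
  pda_acc    :: "nat set"

definition opt_list :: "'b option \<Rightarrow> 'b list" where
  "opt_list x = (case x of None \<Rightarrow> [] | Some y \<Rightarrow> [y])"

definition vpda_wf :: "('a, 'm) vpda \<Rightarrow> bool" where
  "vpda_wf A \<longleftrightarrow> finite (pda_states A) \<and> finite (pda_delta A)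
     \<and> pda_init A \<in> pda_states A \<and> pda_acc A \<subseteq> pda_states A
     \<and> (\<forall>(p, a, g, q, h) \<in> pda_delta A. p \<in> pda_states A \<and> q \<in> pda_states A)"

inductive pda_run :: "('a, 'm::monoid_mult) vpda \<Rightarrow> nat \<times> nat list \<Rightarrow> 'a list \<Rightarrow> 'm
                       \<Rightarrow> nat \<times> nat list \<Rightarrow> bool" for A where
  pda_refl: "pda_run A c [] 1 c"
| pda_step: "\<lbrakk> (p, a, g, q, h) \<in> pda_delta A;
               pda_run A (q, opt_list h @ r) w m c \<rbrakk>
             \<Longrightarrow> pda_run A (p, opt_list g @ r) (opt_list a @ w)
                    (pda_val A (p, a, g, q, h) * m) c"

definition vpda_lang :: "('a, 'm::monoid_mult) vpda \<Rightarrow> 'a list set" where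
  "vpda_lang A = {w. \<exists>q. q \<in> pda_acc A \<and> pda_run A (pda_init A, []) w 1 (q, [])}"

text \<open>The family L(Val, PDA, M), restricted to languages over the (arbitrary) letter type 'a.\<close>

definition vpda_langs :: "'m::monoid_mult itself \<Rightarrow> 'a list set set" where
  "vpda_langs (_ :: 'm itself) =
     {L. \<exists>A :: ('a, 'm) vpda. vpda_wf A \<and> L = vpda_lang A}"

type_synonym 'a nfa_trans = "nat \<times> 'a option \<times> nat"

record ('a, 'n) vnfa =
  nfa_states :: "nat set"
  nfa_delta  :: "'a nfa_trans set"
  nfa_val    :: "'a nfa_trans \<Rightarrow> 'n"
  nfa_init   :: nat
  nfa_acc    :: "nat set"

definition vnfa_wf :: "'n set \<Rightarrow> ('a, 'n) vnfa \<Rightarrow> bool" where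
  "vnfa_wf N A \<longleftrightarrow> finite (nfa_states A) \<and> finite (nfa_delta A)
     \<and> nfa_init A \<in> nfa_states A \<and> nfa_acc A \<subseteq> nfa_states A
     \<and> (\<forall>(p, a, q) \<in> nfa_delta A. p \<in> nfa_states A \<and> q \<in> nfa_states A)
     \<and> (\<forall>t \<in> nfa_delta A. nfa_val A t \<in> N)"

inductive nfa_run :: "('n \<Rightarrow> 'n \<Rightarrow> 'n) \<Rightarrow> 'n \<Rightarrow> ('a, 'n) vnfa
                       \<Rightarrow> nat \<Rightarrow> 'a list \<Rightarrow> 'n \<Rightarrow> nat \<Rightarrow> bool" for mult one A where
  nfa_refl: "nfa_run mult one A p [] one p"
| nfa_step: "\<lbrakk> (p, a, q) \<in> nfa_delta A; nfa_run mult one A q w m r \<rbrakk>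
             \<Longrightarrow> nfa_run mult one A p (opt_list a @ w) (mult (nfa_val A (p, a, q)) m) r"

definition vnfa_lang :: "('n \<Rightarrow> 'n \<Rightarrow> 'n) \<Rightarrow> 'n \<Rightarrow> ('a, 'n) vnfa \<Rightarrow> 'a list set" where
  "vnfa_lang mult one A =
     {w. \<exists>q. q \<in> nfa_acc A \<and> nfa_run mult one A (nfa_init A) w one q}"

text \<open>The family L(Val, NFA, N) for the monoid (N, mult, one), over letter type 'a.\<close>

definition vnfa_langs :: "'n set \<Rightarrow> ('n \<Rightarrow> 'n \<Rightarrow> 'n) \<Rightarrow> 'n \<Rightarrow> 'a list set set" where
  "vnfa_langs N mult one =
     {L. \<exists>A :: ('a, 'n) vnfa. vnfa_wf N A \<and> L = vnfa_lang mult one A}"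

text \<open>Partial functions on X* with X = bool (a two-letter alphabet).
Product in the monoid: f \<cdot> g = "first f, then g", identity = Some.\<close>

type_synonym pfun = "bool list \<Rightarrow> bool list option"

definition pmul :: "pfun \<Rightarrow> pfun \<Rightarrow> pfun" where
  "pmul f g = g \<circ>\<^sub>m f"

definition Pgen :: "bool \<Rightarrow> pfun" where
  "Pgen x = (\<lambda>u. Some (u @ [x]))"

definition Qgen :: "bool \<Rightarrow> pfun" where
  "Qgen x = (\<lambda>u. if u \<noteq> [] \<and> last u = x then Some (butlast u) else None)"

inductive_set P2 :: "pfun set" where
  P2_one: "Some \<in> P2"
| P2_P: "f \<in> P2 \<Longrightarrow> pmul f (Pgen x) \<in> P2"
| P2_Q: "f \<in> P2 \<Longrightarrow> pmul f (Qgen x) \<in> P2"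

definition prodmul :: "pfun \<times> 'm::monoid_mult \<Rightarrow> pfun \<times> 'm \<Rightarrow> pfun \<times> 'm" where
  "prodmul x y = (pmul (fst x) (fst y), snd x * snd y)"

end

theory Submission
  imports Defs "HOL-Library.Nat_Bijection"
begin

lemma pmul_apply: "pmul f g x = (case f x of None \<Rightarrow> None | Some y \<Rightarrow> g y)"
  by (simp add: pmul_def map_comp_def)

lemma pmul_Some_iff: "pmul f g x = Some y \<longleftrightarrow> (\<exists>z. f x = Some z \<and> g z = Some y)"
  by (simp add: pmul_apply split: option.splits)

lemma pmul_assoc: "pmul (pmul f g) h = pmul f (pmul g h)"
  by (rule ext) (simp add: pmul_apply split: option.splits)

lemma pmul_Some_left [simp]: "pmul Some f = f"
  by (rule ext) (simp add: pmul_apply)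

lemma pmul_Some_right [simp]: "pmul f Some = f"
  by (rule ext) (simp add: pmul_apply split: option.splits)

definition gen :: "bool \<times> bool \<Rightarrow> pfun" where
  "gen o' = (if fst o' then Pgen (snd o') else Qgen (snd o'))"

fun opsf :: "(bool \<times> bool) list \<Rightarrow> pfun" where
  "opsf [] = Some"
| "opsf (o' # os) = pmul (gen o') (opsf os)"

lemma opsf_append: "opsf (xs @ ys) = pmul (opsf xs) (opsf ys)"
  by (induction xs) (auto simp: pmul_assoc)

lemma opsf_P2: "opsf os \<in> P2"
proof (induction os rule: rev_induct)
  case Nil then show ?case by (simp add: P2_one)
next
  case (snoc o' os)
  then show ?case
    by (cases o') (auto simp: opsf_append gen_def intro: P2_P P2_Q)
qed

lemma P2_opsf: "f \<in> P2 \<Longrightarrow> \<exists>os. f = opsf os"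
proof (induction rule: P2.induct)
  case P2_one then show ?case by (rule exI[of _ "[]"]) simp
next
  case (P2_P f x)
  then obtain os where "f = opsf os" by blast
  then show ?case by (intro exI[of _ "os @ [(True, x)]"]) (simp add: opsf_append gen_def)
next
  case (P2_Q f x)
  then obtain os where "f = opsf os" by blast
  then show ?case by (intro exI[of _ "os @ [(False, x)]"]) (simp add: opsf_append gen_def)
qed

lemma P2_mul: "f \<in> P2 \<Longrightarrow> g \<in> P2 \<Longrightarrow> pmul f g \<in> P2"
  by (metis P2_opsf opsf_P2 opsf_append)

lemma P2_equiv: "f \<in> P2 \<Longrightarrow> f x = Some y \<Longrightarrow> f (w @ x) = Some (w @ y)"
proof (induction arbitrary: x y rule: P2.induct)
  case P2_one then show ?case by simp
next
  case (P2_P f b)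
  then show ?case by (auto simp: pmul_Some_iff Pgen_def)
next
  case (P2_Q f b)
  then obtain z where z: "f x = Some z" "Qgen b z = Some y" by (auto simp: pmul_Some_iff)
  then have "f (w @ x) = Some (w @ z)" using P2_Q by blast
  moreover have "Qgen b (w @ z) = Some (w @ y)" using z(2)
    by (auto simp: Qgen_def split: if_splits simp: butlast_append)
  ultimately show ?case by (auto simp: pmul_Some_iff)
qed

lemma P2_id: "f \<in> P2 \<Longrightarrow> f [] = Some [] \<Longrightarrow> f = Some"
  by (rule ext) (metis P2_equiv append_Nil2)


lemma pda_step2:
  "(p, a, g, q, h) \<in> pda_delta A \<Longrightarrow> pda_run A (q, s2) w m c \<Longrightarrow> s2 = opt_list h @ r \<Longrightarrow>
   s = opt_list g @ r \<Longrightarrow> w' = opt_list a @ w \<Longrightarrow> m' = pda_val A (p, a, g, q, h) * m \<Longrightarrow>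
   pda_run A (p, s) w' m' c"
  using pda_step by blast

lemma nfa_step2:
  "(p, a, q) \<in> nfa_delta A \<Longrightarrow> nfa_run mult one A q w m r \<Longrightarrow>
   w' = opt_list a @ w \<Longrightarrow> m' = mult (nfa_val A (p, a, q)) m \<Longrightarrow>
   nfa_run mult one A p w' m' r"
  using nfa_step[of p a q A mult one w m r] by simp

definition enc :: "bool \<Rightarrow> nat" where "enc b = (if b then 1 else 0)"
definition dd :: "nat \<Rightarrow> bool" where "dd n = (n \<noteq> 0)"
definition popg :: "bool \<times> bool \<Rightarrow> nat option" where
  "popg o' = (if fst o' then None else Some (enc (snd o')))"
definition pushh :: "bool \<times> bool \<Rightarrow> nat option" where
  "pushh o' = (if fst o' then Some (enc (snd o')) else None)"

lemma dd_enc [simp]: "dd (enc b) = b" by (simp add: dd_def enc_def)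

definition stN :: "nat \<Rightarrow> nat" where "stN p = prod_encode (0, p)"
definition gsN :: "nat \<Rightarrow> nat \<Rightarrow> nat" where "gsN i j = prod_encode (Suc i, j)"

lemma stN_inj [simp]: "stN p = stN q \<longleftrightarrow> p = q" by (simp add: stN_def)
lemma gsN_inj [simp]: "gsN i j = gsN i' j' \<longleftrightarrow> i = i' \<and> j = j'" by (simp add: gsN_def)
lemma stN_gsN [simp]: "stN p \<noteq> gsN i j" "gsN i j \<noteq> stN p" by (simp_all add: stN_def gsN_def)

locale N2P =
  fixes A :: "('a, pfun \<times> 'm::monoid_mult) vnfa"
  assumes wf: "vnfa_wf (P2 \<times> UNIV) A"
begin

definition ts where "ts = (SOME l. set l = nfa_delta A)"

lemma set_ts: "set ts = nfa_delta A"
proof -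
  have "finite (nfa_delta A)" using wf by (simp add: vnfa_wf_def)
  then have "\<exists>l. set l = nfa_delta A" by (rule finite_list)
  then show ?thesis unfolding ts_def by (rule someI_ex)
qed

definition ops where "ops i = (SOME os. opsf os = fst (nfa_val A (ts ! i)))"

lemma ops: "i < length ts \<Longrightarrow> opsf (ops i) = fst (nfa_val A (ts ! i))"
proof -
  assume "i < length ts"
  then have "ts ! i \<in> nfa_delta A" using set_ts nth_mem by blast
  then have "fst (nfa_val A (ts ! i)) \<in> P2" using wf by (auto simp: vnfa_wf_def)
  then have "\<exists>os. opsf os = fst (nfa_val A (ts ! i))" using P2_opsf by metis
  then show ?thesis unfolding ops_def by (rule someI_ex)
qed

definition kk where "kk i = length (ops i)"
definition src where "src i = fst (ts ! i)"
definition lbl where "lbl i = fst (snd (ts ! i))"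
definition tgt where "tgt i = snd (snd (ts ! i))"

lemma ts_eq: "ts ! i = (src i, lbl i, tgt i)" by (simp add: src_def lbl_def tgt_def)

definition T1 :: "'a pda_trans set" where
  "T1 = (\<lambda>i. (stN (src i), lbl i, None, gsN i 0, None)) ` {..<length ts}"
definition T2 :: "'a pda_trans set" where
  "T2 = (\<lambda>(i, j). (gsN i j, None, popg (ops i ! j), gsN i (Suc j), pushh (ops i ! j)))
          ` (SIGMA i:{..<length ts}. {..<kk i})"
definition T3 :: "'a pda_trans set" where
  "T3 = (\<lambda>i. (gsN i (kk i), None, None, stN (tgt i), None)) ` {..<length ts}"

definition valf :: "'a pda_trans \<Rightarrow> 'm" where
  "valf t = (case prod_decode (fst (snd (snd (snd t)))) of
               (Suc i, 0) \<Rightarrow> snd (nfa_val A (ts ! i)) | _ \<Rightarrow> 1)"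

definition B :: "('a, 'm) vpda" where
  "B = \<lparr>pda_states = stN ` nfa_states A \<union> (\<Union>i<length ts. gsN i ` {..kk i}),
        pda_delta = T1 \<union> T2 \<union> T3, pda_val = valf,
        pda_init = stN (nfa_init A), pda_acc = stN ` nfa_acc A\<rparr>"

lemma valf_gs0: "valf (x, a, g, gsN i 0, h) = snd (nfa_val A (ts ! i))"
  by (simp add: valf_def gsN_def)
lemma valf_gsS: "valf (x, a, g, gsN i (Suc j), h) = 1"
  by (simp add: valf_def gsN_def)
lemma valf_st: "valf (x, a, g, stN q, h) = 1"
  by (simp add: valf_def stN_def)

lemma gs_mem [simp]: "i < length ts \<Longrightarrow> j \<le> kk i \<Longrightarrow> gsN i j \<in> (\<Union>i<length ts. gsN i ` {..kk i})"
  by blast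

lemma B_trans:
  assumes "t \<in> T1 \<union> T2 \<union> T3"
  shows "fst t \<in> pda_states B \<and> fst (snd (snd (snd t))) \<in> pda_states B"
proof -
  have tr: "\<And>p a q. (p, a, q) \<in> nfa_delta A \<Longrightarrow> p \<in> nfa_states A \<and> q \<in> nfa_states A"
    using wf unfolding vnfa_wf_def by blast
  have tri: "\<And>i. i < length ts \<Longrightarrow> src i \<in> nfa_states A \<and> tgt i \<in> nfa_states A"
  proof -
    fix i assume "i < length ts"
    then have "ts ! i \<in> nfa_delta A" using set_ts nth_mem by blast
    then show "src i \<in> nfa_states A \<and> tgt i \<in> nfa_states A" using tr ts_eq by metis
  qed
  have g0: "\<And>i j. i < length ts \<Longrightarrow> j \<le> kk i \<Longrightarrow> gsN i j \<in> pda_states B"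
    unfolding B_def by auto
  have s0: "\<And>p. p \<in> nfa_states A \<Longrightarrow> stN p \<in> pda_states B"
    unfolding B_def by auto
  show ?thesis
  proof (cases "t \<in> T1")
    case True
    then obtain i where "i < length ts" "t = (stN (src i), lbl i, None, gsN i 0, None)"
      unfolding T1_def by blast
    then show ?thesis using g0 s0 tri by simp
  next
    case F1: False
    show ?thesis
    proof (cases "t \<in> T2")
      case True
      then obtain i j where "i < length ts" "j < kk i"
        "t = (gsN i j, None, popg (ops i ! j), gsN i (Suc j), pushh (ops i ! j))"
        unfolding T2_def by auto
      then show ?thesis using g0 by simp
    next
      case False
      then have "t \<in> T3" using F1 assms by blast
      then obtain i where "i < length ts" "t = (gsN i (kk i), None, None, stN (tgt i), None)"
        unfolding T3_def by blast
      then show ?thesis using g0 s0 tri by simp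
    qed
  qed
qed

lemma B_wf: "vpda_wf B"
proof -
  have fin: "finite (nfa_states A)" and ini: "nfa_init A \<in> nfa_states A"
    and acc: "nfa_acc A \<subseteq> nfa_states A"
    using wf by (auto simp: vnfa_wf_def)
  have f1: "finite (pda_states B)" unfolding B_def using fin by simp
  have f2: "finite (pda_delta B)" unfolding B_def T1_def T2_def T3_def by simp
  have i: "pda_init B \<in> pda_states B" unfolding B_def using ini by simp
  have a: "pda_acc B \<subseteq> pda_states B" unfolding B_def using acc by auto
  have t: "\<forall>(p, a, g, q, h)\<in>pda_delta B. p \<in> pda_states B \<and> q \<in> pda_states B"
  proof (intro ballI)
    fix t assume "t \<in> pda_delta B"
    then have "t \<in> T1 \<union> T2 \<union> T3" unfolding B_def by simp
    then show "case t of (p, a, g, q, h) \<Rightarrow> p \<in> pda_states B \<and> q \<in> pda_states B"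
      using B_trans[OF \<open>t \<in> T1 \<union> T2 \<union> T3\<close>] by (cases t) simp
  qed
  show ?thesis unfolding vpda_wf_def using f1 f2 i a t by blast
qed

lemma gadget_fwd:
  assumes "i < length ts"
  shows "j \<le> kk i \<Longrightarrow> opsf (drop j (ops i)) x = Some z \<Longrightarrow>
     pda_run B (stN (tgt i), map enc (rev z)) w m c \<Longrightarrow>
     pda_run B (gsN i j, map enc (rev x)) w m c"
proof (induction "kk i - j" arbitrary: j x)
  case 0
  then have j: "j = kk i" by simp
  then have "x = z" using 0 by (simp add: kk_def)
  have "(gsN i (kk i), None, None, stN (tgt i), None) \<in> pda_delta B"
    using assms by (simp add: B_def T3_def)
  then show ?case unfolding j
    by (rule pda_step2[OF _ 0(4), where r = "map enc (rev z)"])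
       (use 0 j \<open>x = z\<close> in \<open>simp_all add: opt_list_def B_def valf_st\<close>)
next
  case (Suc n)
  then have j: "j < kk i" by simp
  define o' where "o' = ops i ! j"
  have dr: "drop j (ops i) = o' # drop (Suc j) (ops i)"
    using j unfolding o'_def kk_def by (simp add: Cons_nth_drop_Suc)
  from Suc.prems(2) obtain x1 where x1: "gen o' x = Some x1"
    "opsf (drop (Suc j) (ops i)) x1 = Some z"
    by (auto simp: dr pmul_Some_iff)
  have IH: "pda_run B (gsN i (Suc j), map enc (rev x1)) w m c"
    using Suc j x1 by simp
  have tr: "(gsN i j, None, popg o', gsN i (Suc j), pushh o') \<in> pda_delta B"
    using assms j unfolding B_def T2_def o'_def by force
  show ?case
  proof (cases "fst o'")
    case True
    then have "x1 = x @ [snd o']" using x1 by (simp add: gen_def Pgen_def)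
    then show ?thesis
      by (intro pda_step2[OF tr IH, where r = "map enc (rev x)"])
         (simp_all add: popg_def pushh_def True opt_list_def B_def valf_gsS)
  next
    case False
    then have "x \<noteq> [] \<and> last x = snd o' \<and> x1 = butlast x" using x1
      by (simp add: gen_def Qgen_def split: if_splits)
    then have "x = x1 @ [snd o']"
      using append_butlast_last_id[of x] by (elim conjE) simp
    then show ?thesis
      by (intro pda_step2[OF tr IH, where r = "map enc (rev x1)"])
         (simp_all add: popg_def pushh_def False opt_list_def B_def valf_gsS)
  qed
qed

lemma fwd:
  "nfa_run prodmul (Some, 1) A p w v r \<Longrightarrow> fst v x = Some y \<Longrightarrow>
   pda_run B (stN p, map enc (rev x)) w (snd v) (stN r, map enc (rev y))"
proof (induction arbitrary: x y rule: nfa_run.induct)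
  case (nfa_refl p)
  then show ?case by (simp add: pda_refl)
next
  case (nfa_step p a q w m r)
  obtain i where i: "i < length ts" "ts ! i = (p, a, q)"
  proof -
    have "(p, a, q) \<in> set ts" using nfa_step.hyps(1) set_ts by simp
    then show ?thesis using that by (auto simp: in_set_conv_nth)
  qed
  have sit: "src i = p" "lbl i = a" "tgt i = q" using i ts_eq by auto
  from nfa_step.prems obtain z where z: "fst (nfa_val A (p, a, q)) x = Some z" "fst m z = Some y"
    by (auto simp: prodmul_def pmul_Some_iff)
  have r1: "pda_run B (stN q, map enc (rev z)) w (snd m) (stN r, map enc (rev y))"
    using nfa_step.IH z(2) .
  have r2: "pda_run B (gsN i 0, map enc (rev x)) w (snd m) (stN r, map enc (rev y))"
  proof -
    have o: "opsf (drop 0 (ops i)) x = Some z" using ops[OF i(1)] i(2) z(1) by simp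
    show ?thesis using gadget_fwd[OF i(1) le0 o] r1 sit(3) by simp
  qed
  have tr: "(stN p, a, None, gsN i 0, None) \<in> pda_delta B"
    using i sit unfolding B_def T1_def by force
  show ?case
    by (rule pda_step2[OF tr r2, where r = "map enc (rev x)"]) (simp_all add: opt_list_def B_def valf_gs0 i prodmul_def)
qed

lemma B_delta_cases:
  assumes "(x, a, g, y, h) \<in> pda_delta B"
  shows "(\<exists>i. i < length ts \<and> x = stN (src i) \<and> a = lbl i \<and> g = None \<and> y = gsN i 0 \<and> h = None)
       \<or> (\<exists>i j. i < length ts \<and> j < kk i \<and> x = gsN i j \<and> a = None \<and> g = popg (ops i ! j)
              \<and> y = gsN i (Suc j) \<and> h = pushh (ops i ! j))
       \<or> (\<exists>i. i < length ts \<and> x = gsN i (kk i) \<and> a = None \<and> g = None \<and> y = stN (tgt i) \<and> h = None)"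
  using assms unfolding B_def T1_def T2_def T3_def by auto

lemma bwd:
  "pda_run B c w m c' \<Longrightarrow> fst c' = stN r \<Longrightarrow>
   (\<forall>p. fst c = stN p \<longrightarrow> (\<exists>f. nfa_run prodmul (Some, 1) A p w (f, m) r \<and>
        f (map dd (rev (snd c))) = Some (map dd (rev (snd c'))))) \<and>
   (\<forall>i j. fst c = gsN i j \<longrightarrow> i < length ts \<longrightarrow> j \<le> kk i \<longrightarrow>
      (\<exists>f z. nfa_run prodmul (Some, 1) A (tgt i) w (f, m) r \<and>
        opsf (drop j (ops i)) (map dd (rev (snd c))) = Some z \<and> f z = Some (map dd (rev (snd c')))))"
proof (induction rule: pda_run.induct)
  case (pda_refl c)
  then show ?case by (auto intro!: exI[of _ Some] nfa_refl)
next
  case (pda_step x a g y h rr w m c)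
  note IH = pda_step.IH[OF pda_step.prems]
  from B_delta_cases[OF pda_step.hyps(1)] show ?case
  proof (elim disjE exE conjE)
    fix i assume i: "i < length ts" and e: "x = stN (src i)" "a = lbl i" "g = None"
      "y = gsN i 0" "h = None"
    obtain f z where f: "nfa_run prodmul (Some, 1) A (tgt i) w (f, m) r"
      "opsf (ops i) (map dd (rev rr)) = Some z" "f z = Some (map dd (rev (snd c)))"
      using IH i e by (auto simp: opt_list_def)
    have tr: "(src i, lbl i, tgt i) \<in> nfa_delta A" using i set_ts ts_eq by (metis nth_mem)
    have run: "nfa_run prodmul (Some, 1) A (src i) (opt_list a @ w)
        (pmul (opsf (ops i)) f, pda_val B (x, a, g, y, h) * m) r"
      by (rule nfa_step2[OF tr f(1)])
         (simp_all add: e prodmul_def ops[OF i] B_def valf_gs0 ts_eq)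
    show ?thesis
      using run f e by (auto simp: opt_list_def pmul_Some_iff)
  next
    fix i j assume i: "i < length ts" "j < kk i" and e: "x = gsN i j" "a = None"
      "g = popg (ops i ! j)" "y = gsN i (Suc j)" "h = pushh (ops i ! j)"
    obtain f z where f: "nfa_run prodmul (Some, 1) A (tgt i) w (f, m) r"
      "opsf (drop (Suc j) (ops i)) (map dd (rev (opt_list h @ rr))) = Some z"
      "f z = Some (map dd (rev (snd c)))"
      using IH i e by (auto simp: Suc_leI)
    have dr: "drop j (ops i) = (ops i ! j) # drop (Suc j) (ops i)"
      using i unfolding kk_def by (simp add: Cons_nth_drop_Suc)
    have g1: "gen (ops i ! j) (map dd (rev (opt_list g @ rr))) = Some (map dd (rev (opt_list h @ rr)))"
      using e by (cases "fst (ops i ! j)")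
        (simp_all add: gen_def popg_def pushh_def opt_list_def Pgen_def Qgen_def)
    have v: "pda_val B (x, a, g, y, h) = 1" using e by (simp add: B_def valf_gsS)
    show ?thesis
      using f g1 dr e v i by (auto simp: opt_list_def pmul_Some_iff)
  next
    fix i assume i: "i < length ts" and e: "x = gsN i (kk i)" "a = None" "g = None"
      "y = stN (tgt i)" "h = None"
    obtain f where f: "nfa_run prodmul (Some, 1) A (tgt i) w (f, m) r"
      "f (map dd (rev rr)) = Some (map dd (rev (snd c)))"
      using IH i e by (auto simp: opt_list_def)
    have dr: "drop (kk i) (ops i) = []" by (simp add: kk_def)
    have v: "pda_val B (x, a, g, y, h) = 1" using e by (simp add: B_def valf_st)
    show ?thesis
      using f dr e v i by (auto simp: opt_list_def)
  qed
qed

lemma lang_B: "vpda_lang B = vnfa_lang prodmul (Some, 1) A"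
proof (intro set_eqI iffI)
  fix w assume "w \<in> vpda_lang B"
  then obtain q where q: "q \<in> pda_acc B" "pda_run B (pda_init B, []) w 1 (q, [])"
    unfolding vpda_lang_def by blast
  then obtain r where r: "r \<in> nfa_acc A" "q = stN r" by (auto simp: B_def)
  have "pda_run B (stN (nfa_init A), []) w 1 (stN r, [])" using q r by (simp add: B_def)
  from bwd[OF this] obtain f where f: "nfa_run prodmul (Some, 1) A (nfa_init A) w (f, 1) r"
    "f [] = Some []" by auto
  have P: "\<forall>t\<in>nfa_delta A. nfa_val A t \<in> P2 \<times> UNIV" using wf by (simp add: vnfa_wf_def)
  have "\<And>v. nfa_run prodmul (Some, 1) A (nfa_init A) w v r \<Longrightarrow> fst v \<in> P2"
  proof -
    fix v assume "nfa_run prodmul (Some, 1) A (nfa_init A) w v r"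
    then show "fst v \<in> P2"
      by (induction rule: nfa_run.induct) (use P in \<open>auto simp: prodmul_def P2_one intro!: P2_mul\<close>)
  qed
  then have "f \<in> P2" using f(1) by fastforce
  then have "f = Some" using f(2) P2_id by blast
  then show "w \<in> vnfa_lang prodmul (Some, 1) A" using f r unfolding vnfa_lang_def by auto
next
  fix w assume "w \<in> vnfa_lang prodmul (Some, 1) A"
  then obtain r where r: "r \<in> nfa_acc A" "nfa_run prodmul (Some, 1) A (nfa_init A) w (Some, 1) r"
    unfolding vnfa_lang_def by blast
  have "pda_run B (stN (nfa_init A), []) w 1 (stN r, [])"
    using fwd[OF r(2), of "[]" "[]"] by simp
  then show "w \<in> vpda_lang B" using r unfolding vpda_lang_def by (auto simp: B_def)
qed

end

lemma nfa_sub_pda: "vnfa_langs (P2 \<times> (UNIV :: 'm::monoid_mult set)) prodmul (Some, 1)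
   \<subseteq> (vpda_langs TYPE('m) :: 'a list set set)"
proof
  fix L :: "'a list set" assume "L \<in> vnfa_langs (P2 \<times> (UNIV :: 'm set)) prodmul (Some, 1)"
  then obtain A :: "('a, pfun \<times> 'm) vnfa" where A: "vnfa_wf (P2 \<times> UNIV) A"
    "L = vnfa_lang prodmul (Some, 1) A" unfolding vnfa_langs_def by blast
  interpret N2P A by standard (rule A(1))
  show "L \<in> vpda_langs TYPE('m)" unfolding vpda_langs_def using B_wf lang_B A(2) by blast
qed


definition code :: "nat \<Rightarrow> bool list" where "code n = False # replicate n True"
definition bits :: "nat list \<Rightarrow> bool list" where "bits s = concat (map code (rev s))"
definition pushf :: "nat option \<Rightarrow> pfun" where
  "pushf h = (case h of None \<Rightarrow> Some | Some n \<Rightarrow> opsf (map (Pair True) (code n)))"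
definition popf :: "nat option \<Rightarrow> pfun" where
  "popf g = (case g of None \<Rightarrow> Some | Some n \<Rightarrow> opsf (map (Pair False) (rev (code n))))"

lemma bits_Nil [simp]: "bits [] = []" by (simp add: bits_def)
lemma bits_Cons [simp]: "bits (n # s) = bits s @ code n" by (simp add: bits_def)
lemma bits_empty: "bits s = [] \<longleftrightarrow> s = []"
  by (cases s) (auto simp: code_def)

lemma push_act: "opsf (map (Pair True) v) u = Some (u @ v)"
  by (induction v arbitrary: u) (auto simp: pmul_apply gen_def Pgen_def)

lemma Qgen_Some: "Qgen b y = Some z \<longleftrightarrow> y = z @ [b]"
  by (auto simp: Qgen_def) (metis append_butlast_last_id)+

lemma two_odd [simp]: "2 * a \<noteq> Suc (2 * b)" "Suc (2 * b) \<noteq> 2 * a" for a b :: nat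
  by arith+

lemma pop_act: "opsf (map (Pair False) (rev v)) x = Some z \<longleftrightarrow> x = z @ v"
proof (induction v arbitrary: x z)
  case Nil then show ?case by simp
next
  case (Cons b v)
  have "opsf (map (Pair False) (rev (b # v))) x = pmul (opsf (map (Pair False) (rev v))) (Qgen b) x"
    by (simp add: opsf_append gen_def)
  also have "\<dots> = Some z \<longleftrightarrow> x = z @ b # v"
    by (auto simp: pmul_Some_iff Cons Qgen_Some)
  finally show ?case .
qed

lemma rep_eq: "replicate a True @ False # xs = replicate b True @ False # ys \<Longrightarrow> a = b \<and> xs = ys"
proof (induction a arbitrary: b)
  case 0 then show ?case by (cases b) auto
next
  case (Suc a) then show ?case by (cases b) auto
qed

lemma code_eq: "xs @ code a = ys @ code b \<Longrightarrow> a = b \<and> xs = ys"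
proof -
  assume "xs @ code a = ys @ code b"
  then have "rev (xs @ code a) = rev (ys @ code b)" by simp
  then have "replicate a True @ False # rev xs = replicate b True @ False # rev ys"
    by (simp add: code_def)
  then have "a = b \<and> rev xs = rev ys" by (rule rep_eq)
  then show ?thesis by simp
qed

lemma decode: "bits s = z @ code n \<Longrightarrow> \<exists>r. s = n # r \<and> z = bits r"
proof (cases s)
  case Nil
  then show "bits s = z @ code n \<Longrightarrow> ?thesis" by (simp add: code_def)
next
  case (Cons m r)
  assume "bits s = z @ code n"
  then have "bits r @ code m = z @ code n" using Cons by simp
  then show ?thesis using code_eq Cons by blast
qed

lemma popf_act: "popf g (u @ bits (opt_list g @ r)) = Some (u @ bits r)"
proof (cases g)
  case None then show ?thesis by (simp add: popf_def opt_list_def)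
next
  case (Some n)
  have "opsf (map (Pair False) (rev (code n))) (u @ bits r @ code n) = Some (u @ bits r)"
    using pop_act by simp
  then show ?thesis using Some by (simp add: popf_def opt_list_def)
qed

lemma pushf_act: "pushf h (u @ bits r) = Some (u @ bits (opt_list h @ r))"
  by (cases h) (simp_all add: pushf_def opt_list_def push_act)

lemma F_act: "pmul (popf g) (pushf h) (u @ bits (opt_list g @ r)) = Some (u @ bits (opt_list h @ r))"
  by (simp add: pmul_apply popf_act pushf_act)

lemma F_inv: "pmul (popf g) (pushf h) (bits s) = Some z \<Longrightarrow>
  \<exists>rr. s = opt_list g @ rr \<and> z = bits (opt_list h @ rr)"
proof -
  assume a: "pmul (popf g) (pushf h) (bits s) = Some z"
  then obtain z0 where z0: "popf g (bits s) = Some z0" "pushf h z0 = Some z"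
    by (auto simp: pmul_Some_iff)
  obtain rr where rr: "s = opt_list g @ rr" "z0 = bits rr"
  proof (cases g)
    case None then show ?thesis using that z0 by (simp add: popf_def opt_list_def)
  next
    case (Some n)
    then have "bits s = z0 @ code n" using z0 by (simp add: popf_def pop_act)
    then obtain r where "s = n # r" "z0 = bits r" using decode by blast
    then show ?thesis using that[of r] Some by (simp add: opt_list_def)
  qed
  then show ?thesis using z0(2)
    by (cases h) (auto simp: pushf_def push_act opt_list_def)
qed

lemma F_P2: "pmul (popf g) (pushf h) \<in> P2"
proof (rule P2_mul)
  show "popf g \<in> P2" by (cases g) (simp_all add: popf_def opsf_P2 P2_one)
  show "pushf h \<in> P2" by (cases h) (simp_all add: pushf_def opsf_P2 P2_one)
qed

locale P2N =
  fixes A :: "('a, 'm::monoid_mult) vpda"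
  assumes wf: "vpda_wf A"
begin

definition ts where "ts = (SOME l. set l = pda_delta A)"

lemma set_ts: "set ts = pda_delta A"
proof -
  have "finite (pda_delta A)" using wf by (simp add: vpda_wf_def)
  then have "\<exists>l. set l = pda_delta A" by (rule finite_list)
  then show ?thesis unfolding ts_def by (rule someI_ex)
qed

definition src where "src i = fst (ts ! i)"
definition lbl where "lbl i = fst (snd (ts ! i))"
definition pg where "pg i = fst (snd (snd (ts ! i)))"
definition tgt where "tgt i = fst (snd (snd (snd (ts ! i))))"
definition ph where "ph i = snd (snd (snd (snd (ts ! i))))"

lemma ts_eq: "ts ! i = (src i, lbl i, pg i, tgt i, ph i)"
  by (simp add: src_def lbl_def pg_def tgt_def ph_def)

definition Fi where "Fi i = pmul (popf (pg i)) (pushf (ph i))"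

definition D1 :: "'a nfa_trans set" where
  "D1 = (\<lambda>i. (2 * src i, lbl i, Suc (2 * i))) ` {..<length ts}"
definition D2 :: "'a nfa_trans set" where
  "D2 = (\<lambda>i. (Suc (2 * i), None, 2 * tgt i)) ` {..<length ts}"

definition valN :: "'a nfa_trans \<Rightarrow> pfun \<times> 'm" where
  "valN t = (if odd (snd (snd t)) then (Fi (snd (snd t) div 2), pda_val A (ts ! (snd (snd t) div 2)))
             else (Some, 1))"

definition C :: "('a, pfun \<times> 'm) vnfa" where
  "C = \<lparr>nfa_states = (\<lambda>p. 2 * p) ` pda_states A \<union> (\<lambda>i. Suc (2 * i)) ` {..<length ts},
        nfa_delta = D1 \<union> D2, nfa_val = valN,
        nfa_init = 2 * pda_init A, nfa_acc = (\<lambda>p. 2 * p) ` pda_acc A\<rparr>"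

lemma valN_odd: "valN (x, a, Suc (2 * i)) = (Fi i, pda_val A (ts ! i))"
  by (simp add: valN_def)
lemma valN_even: "valN (x, a, 2 * i) = (Some, 1)"
  by (simp add: valN_def)

lemma C_wf: "vnfa_wf (P2 \<times> UNIV) C"
proof -
  have fin: "finite (pda_states A)" and ini: "pda_init A \<in> pda_states A"
    and acc: "pda_acc A \<subseteq> pda_states A"
    and tr: "\<And>p a g q h. (p, a, g, q, h) \<in> pda_delta A \<Longrightarrow> p \<in> pda_states A \<and> q \<in> pda_states A"
    using wf unfolding vpda_wf_def by auto
  have tri: "\<And>i. i < length ts \<Longrightarrow> src i \<in> pda_states A \<and> tgt i \<in> pda_states A"
  proof -
    fix i assume "i < length ts"
    then have "ts ! i \<in> pda_delta A" using set_ts nth_mem by blast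
    then show "src i \<in> pda_states A \<and> tgt i \<in> pda_states A" using tr ts_eq by metis
  qed
  have f1: "finite (nfa_states C)" unfolding C_def using fin by simp
  have f2: "finite (nfa_delta C)" unfolding C_def D1_def D2_def by simp
  have i: "nfa_init C \<in> nfa_states C" unfolding C_def using ini by simp
  have a: "nfa_acc C \<subseteq> nfa_states C" unfolding C_def using acc by auto
  have t: "\<forall>(p, a, q)\<in>nfa_delta C. p \<in> nfa_states C \<and> q \<in> nfa_states C"
    unfolding C_def D1_def D2_def using tri by auto
  have v: "\<forall>t\<in>nfa_delta C. nfa_val C t \<in> P2 \<times> UNIV"
    unfolding C_def D1_def D2_def
    by (auto simp: valN_odd valN_even Fi_def F_P2 P2_one)
  show ?thesis unfolding vnfa_wf_def using f1 f2 i a t v by blast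
qed

lemma fwd: "pda_run A c w m c' \<Longrightarrow> \<exists>f. nfa_run prodmul (Some, 1) C (2 * fst c) w (f, m) (2 * fst c')
   \<and> (\<forall>u. f (u @ bits (snd c)) = Some (u @ bits (snd c')))"
proof (induction rule: pda_run.induct)
  case (pda_refl c)
  then show ?case by (intro exI[of _ Some]) (simp add: nfa_refl[of prodmul "(Some, 1)" C, simplified])
next
  case (pda_step p a g q h r w m c)
  then obtain f where f: "nfa_run prodmul (Some, 1) C (2 * q) w (f, m) (2 * fst c)"
    "\<forall>u. f (u @ bits (opt_list h @ r)) = Some (u @ bits (snd c))" by auto
  obtain i where i: "i < length ts" "ts ! i = (p, a, g, q, h)"
  proof -
    have "(p, a, g, q, h) \<in> set ts" using pda_step.hyps(1) set_ts by simp
    then show ?thesis using that by (auto simp: in_set_conv_nth)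
  qed
  have e: "src i = p" "lbl i = a" "pg i = g" "tgt i = q" "ph i = h" using i ts_eq by auto
  have t2: "(Suc (2 * i), None, 2 * q) \<in> nfa_delta C" using i e unfolding C_def D2_def by force
  have t1: "(2 * p, a, Suc (2 * i)) \<in> nfa_delta C" using i e unfolding C_def D1_def by force
  have r2: "nfa_run prodmul (Some, 1) C (Suc (2 * i)) w (f, m) (2 * fst c)"
    by (rule nfa_step2[OF t2 f(1)]) (simp_all add: opt_list_def C_def valN_even prodmul_def)
  have r1: "nfa_run prodmul (Some, 1) C (2 * p) (opt_list a @ w)
     (pmul (Fi i) f, pda_val A (p, a, g, q, h) * m) (2 * fst c)"
    by (rule nfa_step2[OF t1 r2]) (simp_all add: C_def valN_odd prodmul_def i)
  have "\<forall>u. pmul (Fi i) f (u @ bits (opt_list g @ r)) = Some (u @ bits (snd c))"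
    using f(2) F_act e by (simp add: Fi_def pmul_apply)
  then show ?case using r1 by auto
qed

lemma bwd: "nfa_run prodmul (Some, 1) C x w v y \<Longrightarrow> y = 2 * r \<Longrightarrow>
  (\<forall>p s. x = 2 * p \<longrightarrow> fst v (bits s) = Some [] \<longrightarrow> pda_run A (p, s) w (snd v) (r, [])) \<and>
  (\<forall>i s. x = Suc (2 * i) \<longrightarrow> i < length ts \<longrightarrow> fst v (bits s) = Some [] \<longrightarrow>
      pda_run A (tgt i, s) w (snd v) (r, []))"
proof (induction rule: nfa_run.induct)
  case (nfa_refl p)
  then show ?case by (auto simp: bits_empty pda_refl)
next
  case (nfa_step x a y0 w v' y)
  note IH = nfa_step.IH[OF nfa_step.prems]
  have "(x, a, y0) \<in> D1 \<union> D2" using nfa_step.hyps(1) by (simp add: C_def)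
  then show ?case
  proof
    assume "(x, a, y0) \<in> D1"
    then obtain i where i: "i < length ts" "x = 2 * src i" "a = lbl i" "y0 = Suc (2 * i)"
      unfolding D1_def by auto
    have val: "nfa_val C (x, a, y0) = (Fi i, pda_val A (ts ! i))" using i by (simp add: C_def valN_odd)
    have H: "pda_run A (src i, s) (opt_list a @ w) (pda_val A (ts ! i) * snd v') (r, [])"
      if s: "pmul (Fi i) (fst v') (bits s) = Some []" for s
    proof -
      obtain z where z: "Fi i (bits s) = Some z" "fst v' z = Some []"
        using s by (auto simp: pmul_Some_iff)
      obtain rr where rr: "s = opt_list (pg i) @ rr" "z = bits (opt_list (ph i) @ rr)"
        using F_inv z(1) unfolding Fi_def by blast
      have run: "pda_run A (tgt i, opt_list (ph i) @ rr) w (snd v') (r, [])"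
        using IH i z rr by auto
      have tr: "(src i, lbl i, pg i, tgt i, ph i) \<in> pda_delta A"
        using i set_ts ts_eq by (metis nth_mem)
      show ?thesis
        by (rule pda_step2[OF tr run refl]) (simp_all add: rr i ts_eq)
    qed
    have P: "prodmul (nfa_val C (x, a, y0)) v' = (pmul (Fi i) (fst v'), pda_val A (ts ! i) * snd v')"
      by (simp add: val prodmul_def)
    show ?thesis unfolding P
    proof (intro conjI allI impI)
      fix p s assume "x = 2 * p" "fst (pmul (Fi i) (fst v'), pda_val A (ts ! i) * snd v') (bits s) = Some []"
      then show "pda_run A (p, s) (opt_list a @ w) (snd (pmul (Fi i) (fst v'), pda_val A (ts ! i) * snd v')) (r, [])"
        using H i(2) by simp
    next
      fix i' s assume "x = Suc (2 * i')"
      then have False using i(2) by simp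
      then show "pda_run A (tgt i', s) (opt_list a @ w) (snd (pmul (Fi i) (fst v'), pda_val A (ts ! i) * snd v')) (r, [])" ..
    qed
  next
    assume "(x, a, y0) \<in> D2"
    then obtain i where i: "i < length ts" "x = Suc (2 * i)" "a = None" "y0 = 2 * tgt i"
      unfolding D2_def by auto
    have val: "nfa_val C (x, a, y0) = (Some, 1)" using i by (simp add: C_def valN_even)
    have P: "prodmul (nfa_val C (x, a, y0)) v' = (fst v', snd v')"
      by (simp add: val prodmul_def)
    have w: "opt_list a @ w = w" using i by (simp add: opt_list_def)
    show ?thesis unfolding P w
    proof (intro conjI allI impI)
      fix p s assume "x = 2 * p"
      then have False using i(2) by simp
      then show "pda_run A (p, s) w (snd (fst v', snd v')) (r, [])" ..
    next
      fix i' s assume "x = Suc (2 * i')" "i' < length ts" "fst (fst v', snd v') (bits s) = Some []"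
      then show "pda_run A (tgt i', s) w (snd (fst v', snd v')) (r, [])"
        using IH i by simp
    qed
  qed
qed

lemma lang_C: "vnfa_lang prodmul (Some, 1) C = vpda_lang A"
proof (intro set_eqI iffI)
  fix w assume "w \<in> vnfa_lang prodmul (Some, 1) C"
  then obtain q where q: "q \<in> nfa_acc C" "nfa_run prodmul (Some, 1) C (nfa_init C) w (Some, 1) q"
    unfolding vnfa_lang_def by blast
  then obtain r where r: "r \<in> pda_acc A" "q = 2 * r" by (auto simp: C_def)
  have "pda_run A (pda_init A, []) w 1 (r, [])"
    using bwd[OF q(2) r(2)] by (simp add: C_def)
  then show "w \<in> vpda_lang A" using r unfolding vpda_lang_def by auto
next
  fix w assume "w \<in> vpda_lang A"
  then obtain r where r: "r \<in> pda_acc A" "pda_run A (pda_init A, []) w 1 (r, [])"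
    unfolding vpda_lang_def by blast
  from fwd[OF r(2)] obtain f where f: "nfa_run prodmul (Some, 1) C (2 * pda_init A) w (f, 1) (2 * r)"
    "\<forall>u. f u = Some u" by auto
  have "f = Some" using f(2) by (simp add: fun_eq_iff)
  then show "w \<in> vnfa_lang prodmul (Some, 1) C" using f r unfolding vnfa_lang_def C_def by auto
qed

end

lemma pda_sub_nfa: "(vpda_langs TYPE('m::monoid_mult) :: 'a list set set)
   \<subseteq> vnfa_langs (P2 \<times> (UNIV :: 'm set)) prodmul (Some, 1)"
proof
  fix L :: "'a list set" assume "L \<in> vpda_langs TYPE('m)"
  then obtain A :: "('a, 'm) vpda" where A: "vpda_wf A" "L = vpda_lang A"
    unfolding vpda_langs_def by blast
  interpret P2N A by standard (rule A(1))
  show "L \<in> vnfa_langs (P2 \<times> (UNIV :: 'm set)) prodmul (Some, 1)"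
    unfolding vnfa_langs_def using C_wf lang_C A(2) by blast
qed

theorem theorem1:
  "(vpda_langs TYPE('m::monoid_mult) :: 'a list set set)
     = vnfa_langs (P2 \<times> (UNIV :: 'm set)) prodmul (Some, 1)"
  using pda_sub_nfa nfa_sub_pda by blast

end
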